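(* Let $k\ge1$ be an integer. If $\pi$ is a graphical sequence of length $n$ such that every graphical sequence $\pi'\le\pi$ (termwise) of length $n$ is forcibly $\chi(G)\le 2k$, then every graphical sequence $\pi'\le\pi$ of length $n$ is forcibly $a(G)\le k$. That is, $\mathrm{BM}(\chi(G)\le2k)\subseteq\mathrm{BM}(a(G)\le k)$.
   Context: Graphs are finite and simple; a graphical sequence is a nondecreasing integer sequence that is the degree sequence of some graph (a realization). A graphical sequence is forcibly $P$ if every realization has $P$. For a decreasing property $P$ (preserved under deleting edges), $\mathrm{BM}(P)$ is the set of graphical sequences $\pi$ such that every graphical sequence of the same length that is termwise at most $\pi$ is forcibly $P$. $\chi$ is the chromatic number; the vertex arboricity $a(G)$ is the minimum number of parts in a partition of $V(G)$ into sets each inducing a forest. *)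

theory Defs
  imports Main
begin

definition simple_graph :: "nat \<Rightarrow> nat set set \<Rightarrow> bool" where
  "simple_graph n E \<longleftrightarrow> (\<forall>e\<in>E. e \<subseteq> {0..<n} \<and> card e = 2)"

definition adj :: "nat set set \<Rightarrow> nat \<Rightarrow> nat \<Rightarrow> bool" where
  "adj E u v \<longleftrightarrow> u \<noteq> v \<and> {u, v} \<in> E"

definition degree :: "nat set set \<Rightarrow> nat \<Rightarrow> nat" where
  "degree E v = card {u. adj E u v}"

(* E realizes the sequence d (length n): vertex i has degree d!i.  Every graph with degree
   sequence d is isomorphic to such a labelled graph. *)
definition realization :: "nat list \<Rightarrow> nat set set \<Rightarrow> bool" where
  "realization d E \<longleftrightarrow> simple_graph (length d) E \<and> (\<forall>i<length d. degree E i = d ! i)"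

definition graphical :: "nat list \<Rightarrow> bool" where
  "graphical d \<longleftrightarrow> sorted d \<and> (\<exists>E. realization d E)"

definition forcibly :: "(nat \<Rightarrow> nat set set \<Rightarrow> bool) \<Rightarrow> nat list \<Rightarrow> bool" where
  "forcibly P d \<longleftrightarrow> (\<forall>E. realization d E \<longrightarrow> P (length d) E)"

definition termwise_le :: "nat list \<Rightarrow> nat list \<Rightarrow> bool" where
  "termwise_le d' d \<longleftrightarrow> length d' = length d \<and> (\<forall>i<length d. d' ! i \<le> d ! i)"

definition BM :: "(nat \<Rightarrow> nat set set \<Rightarrow> bool) \<Rightarrow> nat list set" where
  "BM P = {d. graphical d \<and> (\<forall>d'. graphical d' \<and> termwise_le d' d \<longrightarrow> forcibly P d')}"

definition colorable :: "nat \<Rightarrow> nat set set \<Rightarrow> nat \<Rightarrow> bool" where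
  "colorable n E m \<longleftrightarrow> (\<exists>c. (\<forall>v<n. c v < m) \<and> (\<forall>u<n. \<forall>v<n. adj E u v \<longrightarrow> c u \<noteq> c v))"

definition chromatic_number :: "nat \<Rightarrow> nat set set \<Rightarrow> nat" where
  "chromatic_number n E = (LEAST m. colorable n E m)"

definition is_cycle :: "nat set set \<Rightarrow> nat list \<Rightarrow> bool" where
  "is_cycle E cs \<longleftrightarrow> length cs \<ge> 3 \<and> distinct cs
     \<and> (\<forall>i. Suc i < length cs \<longrightarrow> adj E (cs ! i) (cs ! Suc i))
     \<and> adj E (last cs) (hd cs)"

definition induces_forest :: "nat set set \<Rightarrow> nat set \<Rightarrow> bool" where
  "induces_forest E S \<longleftrightarrow> \<not> (\<exists>cs. set cs \<subseteq> S \<and> is_cycle E cs)"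

definition forest_partitionable :: "nat \<Rightarrow> nat set set \<Rightarrow> nat \<Rightarrow> bool" where
  "forest_partitionable n E m \<longleftrightarrow> (\<exists>f. (\<forall>v<n. f v < m)
      \<and> (\<forall>j<m. induces_forest E {v. v < n \<and> f v = j}))"

definition vertex_arboricity :: "nat \<Rightarrow> nat set set \<Rightarrow> nat" where
  "vertex_arboricity n E = (LEAST m. forest_partitionable n E m)"

end

theory Submission
  imports Defs
begin

lemma adj_sym: "adj E u v = adj E v u"
  unfolding adj_def by (auto simp: insert_commute)

lemma adj_lt: "simple_graph n E \<Longrightarrow> adj E u v \<Longrightarrow> u < n \<and> v < n"
  unfolding adj_def simple_graph_def by auto

lemma cyc_adj:
  assumes "is_cycle E cs" "i < length cs"
  shows "adj E (cs ! i) (cs ! ((i+1) mod length cs))"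
proof (cases "Suc i < length cs")
  case True thus ?thesis using assms by (auto simp: is_cycle_def)
next
  case False
  hence "i = length cs - 1" using assms by auto
  moreover have "cs \<noteq> []" using assms by (auto simp: is_cycle_def)
  ultimately show ?thesis using assms
    by (auto simp: is_cycle_def last_conv_nth hd_conv_nth)
qed

lemma forest_insert:
  assumes "induces_forest E S"
    and uniq: "\<And>a b. a \<in> S \<Longrightarrow> b \<in> S \<Longrightarrow> adj E x a \<Longrightarrow> adj E x b \<Longrightarrow> a = b"
  shows "induces_forest E (insert x S)"
  unfolding induces_forest_def
proof
  assume "\<exists>cs. set cs \<subseteq> insert x S \<and> is_cycle E cs"
  then obtain cs where cs: "set cs \<subseteq> insert x S" "is_cycle E cs" by blast
  have "x \<in> set cs" using assms(1) cs unfolding induces_forest_def by blast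
  then obtain i where i: "i < length cs" "cs ! i = x" by (auto simp: in_set_conv_nth)
  define l where "l = length cs"
  have l3: "l \<ge> 3" and dist: "distinct cs" using cs(2) by (auto simp: is_cycle_def l_def)
  define p where "p = (if i = 0 then l - 1 else i - 1)"
  define q where "q = (if i + 1 < l then i + 1 else 0)"
  have pl: "p < l" and ql: "q < l" using l3 i by (auto simp: p_def q_def l_def)
  have pi: "(p+1) mod l = i" using i l3 unfolding p_def l_def by auto
  have qi: "q = (i+1) mod l"
  proof (cases "i + 1 < l")
    case False hence "i + 1 = l" using i by (simp add: l_def)
    thus ?thesis using False by (simp add: q_def)
  qed (simp add: q_def)
  have a1: "adj E x (cs ! q)" using cyc_adj[OF cs(2) i(1)] i qi by (simp add: l_def)
  have a2: "adj E x (cs ! p)" using cyc_adj[OF cs(2), of p] pl pi i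
    by (simp add: l_def adj_sym)
  have pq: "p \<noteq> q" using l3 i unfolding p_def q_def l_def by auto
  have pneq: "p \<noteq> i" using l3 i unfolding p_def l_def by auto
  have qneq: "q \<noteq> i" using l3 i unfolding q_def l_def by auto
  have "cs ! p \<noteq> x" using pneq dist pl i using nth_eq_iff_index_eq unfolding l_def by metis
  hence "cs ! p \<in> S" using cs(1) pl nth_mem unfolding l_def by blast
  have "cs ! q \<noteq> x" using qneq dist ql i using nth_eq_iff_index_eq unfolding l_def by metis
  hence "cs ! q \<in> S" using cs(1) ql nth_mem unfolding l_def by blast
  have "cs ! p \<noteq> cs ! q" using pq dist pl ql using nth_eq_iff_index_eq unfolding l_def by metis
  thus False using uniq \<open>cs ! p \<in> S\<close> \<open>cs ! q \<in> S\<close> a1 a2 by blast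
qed


lemma finite_nbrs: "simple_graph n E \<Longrightarrow> finite {u. adj E u x}"
  by (rule finite_subset[of _ "{0..<n}"]) (auto dest: adj_lt)

lemma extend:
  assumes sg: "simple_graph n E" and fA: "finite A" and xn: "x < n" and xA: "x \<notin> A"
    and dx: "degree E x < 2 * k"
    and fk: "\<forall>v\<in>A. f v < k"
    and fo: "\<forall>j<k. induces_forest E {v\<in>A. f v = j}"
  shows "\<exists>j<k. \<forall>j'<k. induces_forest E {v\<in>insert x A. (f(x:=j)) v = j'}"
proof -
  define N where "N = {u\<in>A. adj E x u}"
  have fN: "finite N" using fA by (simp add: N_def)
  have "N \<subseteq> {u. adj E u x}" by (auto simp: N_def adj_sym)
  hence "card N \<le> degree E x" unfolding degree_def using card_mono[OF finite_nbrs[OF sg]] by blast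
  hence cN: "card N < 2 * k" using dx by linarith
  have "\<exists>j<k. card (N \<inter> {v. f v = j}) \<le> 1"
  proof (rule ccontr)
    assume "\<not> ?thesis"
    hence ge: "\<forall>j<k. card (N \<inter> {v. f v = j}) \<ge> 2" by auto
    have Nu: "N = (\<Union>j\<in>{..<k}. N \<inter> {v. f v = j})" using fk by (auto simp: N_def)
    have "card N = (\<Sum>j\<in>{..<k}. card (N \<inter> {v. f v = j}))"
      by (subst Nu, rule card_UN_disjoint) (use fN in auto)
    also have "\<dots> \<ge> (\<Sum>j\<in>{..<k}. 2)" by (rule sum_mono) (use ge in auto)
    finally show False using cN by simp
  qed
  then obtain j where j: "j < k" "card (N \<inter> {v. f v = j}) \<le> 1" by blast
  show ?thesis
  proof (intro exI[of _ j] conjI allI impI j(1))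
    fix j' assume j': "j' < k"
    show "induces_forest E {v\<in>insert x A. (f(x:=j)) v = j'}"
    proof (cases "j' = j")
      case False
      have "{v\<in>insert x A. (f(x:=j)) v = j'} = {v\<in>A. f v = j'}" using False xA by auto
      thus ?thesis using fo j' by simp
    next
      case True
      have eq: "{v\<in>insert x A. (f(x:=j)) v = j'} = insert x {v\<in>A. f v = j}" using True xA by auto
      show ?thesis unfolding eq
      proof (rule forest_insert)
        show "induces_forest E {v \<in> A. f v = j}" using fo j by simp
        fix a b assume ab: "a \<in> {v \<in> A. f v = j}" "b \<in> {v \<in> A. f v = j}" "adj E x a" "adj E x b"
        hence "a \<in> N \<inter> {v. f v = j}" "b \<in> N \<inter> {v. f v = j}" unfolding N_def by blast+
        moreover have fNj: "finite (N \<inter> {v. f v = j})" using fN by blast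
        moreover have "card (N \<inter> {v. f v = j}) \<le> Suc 0" using j(2) by simp
        ultimately show "a = b" using card_le_Suc0_iff_eq by blast
      qed
    qed
  qed
qed

lemma div2_cases: "(n::nat) div 2 = j \<Longrightarrow> n = 2*j \<or> n = 2*j+1" by presburger

lemma base:
  assumes fB: "finite B" and cB: "card B \<le> 2 * k"
  shows "\<exists>f. (\<forall>v\<in>B. f v < k) \<and> (\<forall>j<k. induces_forest E {v\<in>B. f v = j})"
proof -
  obtain g where g: "bij_betw g B {0..<card B}" using ex_bij_betw_finite_nat[OF fB] by blast
  define f where "f v = g v div 2" for v
  have "\<forall>v\<in>B. f v < k"
  proof
    fix v assume "v \<in> B"
    hence "g v \<in> {0..<card B}" using g unfolding bij_betw_def by blast
    hence "g v < 2 * k" using cB by simp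
    thus "f v < k" unfolding f_def by (simp add: less_mult_imp_div_less mult.commute)
  qed
  moreover have "\<forall>j<k. induces_forest E {v\<in>B. f v = j}"
  proof (intro allI impI)
    fix j assume "j < k"
    let ?C = "{v\<in>B. f v = j}"
    have "g ` ?C \<subseteq> {2*j, 2*j+1}" unfolding f_def using div2_cases by blast
    moreover have "inj_on g ?C" using g unfolding bij_betw_def by (auto intro: inj_on_subset)
    ultimately have "card ?C \<le> card {2*j, 2*j+1}"
      by (metis card_image card_mono finite.emptyI finite.insertI)
    also have "\<dots> \<le> 2" by (simp add: card_insert_le_m1)
    finally have "card ?C \<le> 2" .
    show "induces_forest E ?C" unfolding induces_forest_def
    proof
      assume "\<exists>cs. set cs \<subseteq> ?C \<and> is_cycle E cs"
      then obtain cs where "set cs \<subseteq> ?C" "is_cycle E cs" by blast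
      hence "card (set cs) \<le> card ?C" using fB by (intro card_mono) auto
      moreover have "card (set cs) \<ge> 3" using \<open>is_cycle E cs\<close>
        by (auto simp: is_cycle_def distinct_card)
      ultimately show False using \<open>card ?C \<le> 2\<close> by simp
    qed
  qed
  ultimately show ?thesis by blast
qed


lemma partition_all:
  assumes sg: "simple_graph n E" and fB: "finite B" and cB: "card B \<le> 2 * k"
    and fL: "finite L"
  shows "(\<forall>x\<in>L. x < n \<and> degree E x < 2 * k \<and> x \<notin> B) \<Longrightarrow>
    \<exists>f. (\<forall>v\<in>B \<union> L. f v < k) \<and> (\<forall>j<k. induces_forest E {v\<in>B \<union> L. f v = j})"
  using fL
proof (induction L rule: finite_induct)
  case empty thus ?case using base[OF fB cB] by simp
next
  case (insert x L)
  then obtain f where f: "\<forall>v\<in>B \<union> L. f v < k" "\<forall>j<k. induces_forest E {v\<in>B \<union> L. f v = j}"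
    by auto
  have x: "x < n" "degree E x < 2 * k" "x \<notin> B \<union> L" using insert by auto
  obtain j where j: "j < k" "\<forall>j'<k. induces_forest E {v\<in>insert x (B \<union> L). (f(x:=j)) v = j'}"
    using extend[OF sg _ x(1) x(3) x(2) f(1) f(2)] fB insert.hyps(1) by blast
  show ?case
    by (rule exI[of _ "f(x:=j)"]) (use j f(1) in auto)
qed

theorem mainTheorem12:
  fixes k :: nat
  assumes "k \<ge> 1"
  shows "BM (\<lambda>n E. chromatic_number n E \<le> 2 * k) \<subseteq> BM (\<lambda>n E. vertex_arboricity n E \<le> k)"
proof
  fix d assume dBM: "d \<in> BM (\<lambda>n E. chromatic_number n E \<le> 2 * k)"
  hence gd: "graphical d" and Hd: "\<And>d'. graphical d' \<Longrightarrow> termwise_le d' d \<Longrightarrow>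
      forcibly (\<lambda>n E. chromatic_number n E \<le> 2 * k) d'" by (auto simp: BM_def)
  define n where "n = length d"
  have "\<forall>d'. graphical d' \<and> termwise_le d' d \<longrightarrow> forcibly (\<lambda>n E. vertex_arboricity n E \<le> k) d'"
  proof (intro allI impI)
    fix d' assume "graphical d' \<and> termwise_le d' d"
    hence gd': "graphical d'" and tl: "termwise_le d' d" by auto
    have ln: "length d' = n" using tl by (simp add: termwise_le_def n_def)
    show "forcibly (\<lambda>n E. vertex_arboricity n E \<le> k) d'" unfolding forcibly_def
    proof (intro allI impI)
      fix E assume rE: "realization d' E"
      have sg: "simple_graph n E" using rE ln by (simp add: realization_def)
      have degE: "\<And>i. i < n \<Longrightarrow> degree E i = d' ! i" using rE ln by (simp add: realization_def)
      define B where "B = {v. v < n \<and> degree E v \<ge> 2 * k}"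
      have fB: "finite B" by (simp add: B_def)
      show "vertex_arboricity (length d') E \<le> k"
      proof (cases "card B \<le> 2 * k")
        case True
        define L where "L = {v. v < n \<and> degree E v < 2 * k}"
        obtain f where f: "\<forall>v\<in>B \<union> L. f v < k" "\<forall>j<k. induces_forest E {v\<in>B \<union> L. f v = j}"
        proof -
          have fL: "finite L" by (simp add: L_def)
          have "\<forall>x\<in>L. x < n \<and> degree E x < 2 * k \<and> x \<notin> B" by (simp add: L_def B_def)
          from partition_all[OF sg fB True fL this] that show ?thesis by blast
        qed
        have BL: "B \<union> L = {v. v < n}" by (auto simp: B_def L_def)
        have "forest_partitionable n E k" unfolding forest_partitionable_def
          by (rule exI[of _ f]) (use f BL in auto)
        thus ?thesis unfolding vertex_arboricity_def ln by (rule Least_le)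
      next
        case False
        hence cB: "card B \<ge> 2 * k + 1" by simp
        have Bsub: "B \<subseteq> {0..<n}" by (auto simp: B_def)
        have nbig: "n \<ge> 2 * k + 1" using card_mono[OF _ Bsub] cB by simp
        define m where "m = n - (2 * k + 1)"
        define T where "T = {m..<n}"
        have cT: "card T = 2 * k + 1" using nbig by (simp add: T_def m_def)
        have sd: "sorted d" using gd by (simp add: graphical_def)
        have dT: "d ! i \<ge> 2 * k" if "i \<in> T" for i
        proof (rule ccontr)
          assume "\<not> 2 * k \<le> d ! i"
          hence di: "d ! i < 2 * k" by simp
          have iT: "m \<le> i" "i < n" using that by (auto simp: T_def)
          have "B \<subseteq> {Suc i..<n}"
          proof
            fix v assume vB: "v \<in> B"
            hence vn: "v < n" and dv: "degree E v \<ge> 2 * k" by (auto simp: B_def)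
            have "d' ! v \<le> d ! v" using tl vn by (simp add: termwise_le_def n_def)
            hence "d ! v \<ge> 2 * k" using dv degE[OF vn] by simp
            moreover have "v \<le> i \<Longrightarrow> d ! v \<le> d ! i"
              using sd iT by (simp add: sorted_nth_mono n_def)
            ultimately have "i < v" using di by (meson leI le_trans not_le)
            thus "v \<in> {Suc i..<n}" using vn by simp
          qed
          hence "card B \<le> n - Suc i" using card_mono[of "{Suc i..<n}" B] by simp
          thus False using cB iT by (simp add: m_def)
        qed
        define d'' where "d'' = replicate m (0::nat) @ replicate (2 * k + 1) (2 * k)"
        have ld'': "length d'' = n" using nbig by (simp add: d''_def m_def)
        have d''i: "d'' ! i = (if i < m then 0 else 2 * k)" if "i < n" for i
          using that nbig by (simp add: d''_def nth_append m_def nth_replicate del: replicate_Suc)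
        define E'' where "E'' = {e. \<exists>a\<in>T. \<exists>b\<in>T. a \<noteq> b \<and> e = {a, b}}"
        have adjE: "adj E'' u v \<longleftrightarrow> u \<noteq> v \<and> u \<in> T \<and> v \<in> T" for u v
          unfolding adj_def E''_def by (auto simp: doubleton_eq_iff)
        have sg'': "simple_graph n E''"
          unfolding simple_graph_def
        proof
          fix e assume "e \<in> E''"
          then obtain a b where ab: "a \<in> T" "b \<in> T" "a \<noteq> b" "e = {a, b}" unfolding E''_def by blast
          thus "e \<subseteq> {0..<n} \<and> card e = 2" by (auto simp: T_def)
        qed
        have deg'': "degree E'' i = d'' ! i" if "i < n" for i
        proof (cases "i \<in> T")
          case True
          have "{u. adj E'' u i} = T - {i}" using True adjE by auto
          hence "degree E'' i = 2 * k" using cT True by (simp add: degree_def)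
          thus ?thesis using d''i[OF that] True by (simp add: T_def)
        next
          case False
          have "{u. adj E'' u i} = {}" using False adjE by auto
          thus ?thesis using d''i[OF that] False that by (simp add: degree_def T_def)
        qed
        have gd'': "graphical d''" unfolding graphical_def realization_def
        proof (intro conjI exI)
          show "sorted d''" unfolding d''_def by (auto simp: sorted_append)
          show "simple_graph (length d'') E''" using sg'' ld'' by simp
          show "\<forall>i<length d''. degree E'' i = d'' ! i" using deg'' ld'' by simp
        qed
        have tl'': "termwise_le d'' d"
          unfolding termwise_le_def
        proof (intro conjI allI impI)
          show "length d'' = length d" using ld'' n_def by simp
          fix i assume "i < length d"
          thus "d'' ! i \<le> d ! i" using d''i dT by (auto simp: n_def T_def)
        qed
        have "realization d'' E''" unfolding realization_def using sg'' deg'' ld'' by simp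
        hence chi: "chromatic_number n E'' \<le> 2 * k"
          using Hd[OF gd'' tl''] ld'' by (simp add: forcibly_def)
        have "colorable n E'' n" unfolding colorable_def
          by (rule exI[of _ id]) (auto simp: adj_def)
        hence "colorable n E'' (chromatic_number n E'')"
          unfolding chromatic_number_def by (rule LeastI)
        then obtain c where c: "\<forall>v<n. c v < chromatic_number n E''"
          "\<forall>u<n. \<forall>v<n. adj E'' u v \<longrightarrow> c u \<noteq> c v" unfolding colorable_def by blast
        have "inj_on c T" using c(2) adjE unfolding inj_on_def T_def by (metis atLeastLessThan_iff)
        moreover have "c ` T \<subseteq> {0..<chromatic_number n E''}" using c(1) by (auto simp: T_def)
        ultimately have "card T \<le> card {0..<chromatic_number n E''}"
          by (intro card_inj_on_le) auto
        thus ?thesis using cT chi by simp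
      qed
    qed
  qed
  thus "d \<in> BM (\<lambda>n E. vertex_arboricity n E \<le> k)" using gd by (simp add: BM_def)
qed

end
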